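(* Let $p\in(0,1)$, let $k$ be a positive integer, and let $u_1\ge u_2\ge\dots\ge u_{3k}\ge0$. Then $$\Big(\sum_{i=k+1}^{3k}u_i^2\Big)^{1/2}\le C_1(p)k^{\frac12-\frac1p}\Big(\sum_{i=1}^{2k}u_i^p\Big)^{1/p},\qquad C_1(p)=\begin{cases}(\frac p2)^{\frac12}\big(\frac{2}{2-p}\big)^{\frac12-\frac1p}, & p\in(0,p^{\star}],\\ 2^{\frac12-\frac1p}, & p\in(p^{\star},1).\end{cases}$$
   Context: $p^{\star}\approx0.45418$ is the unique solution in $(0,1]$ of $(\frac{p}{2})^{1/2}(2-p)^{\frac1p-\frac12}=1$. *)

theory Defs
  imports "HOL-Analysis.Analysis"
begin

definition pstar :: real where
  "pstar = (THE p. p \<in> {0<..1} \<and> (p/2) powr (1/2) * (2 - p) powr (1/p - 1/2) = 1)"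

definition C1 :: "real \<Rightarrow> real" where
  "C1 p = (if p \<le> pstar then (p/2) powr (1/2) * (2/(2 - p)) powr (1/2 - 1/p)
           else 2 powr (1/2 - 1/p))"

end

theory Submission
  imports Defs
begin



definition ff :: "real \<Rightarrow> real" where
  "ff p = (p/2) powr (1/2) * (2 - p) powr (1/p - 1/2)"
definition gg :: "real \<Rightarrow> real" where
  "gg p = ln (p/2) / 2 + (1/p - 1/2) * ln (2 - p)"

lemma ff_gg: "0 < p \<Longrightarrow> p < 2 \<Longrightarrow> ff p = exp (gg p)"
  by (simp add: ff_def gg_def powr_def exp_add mult.commute)

lemma gg_deriv: "0 < x \<Longrightarrow> x < 2 \<Longrightarrow> (gg has_real_derivative (- ln (2 - x) / x^2)) (at x)"
  unfolding gg_def
  apply (rule derivative_eq_intros refl | simp)+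
  apply (simp add: field_simps power2_eq_square)
  done

lemma gg_cont: "continuous_on {a..b} gg" if "0 < a" "b < 2"
proof -
  have "\<forall>x\<in>{a..b}. isCont gg x"
  proof
    fix x assume "x \<in> {a..b}"
    hence "0 < x" "x < 2" using that by auto
    thus "isCont gg x" using gg_deriv DERIV_isCont by blast
  qed
  thus ?thesis by (simp add: continuous_at_imp_continuous_on)
qed

lemma gg_decr: "0 < a \<Longrightarrow> a < b \<Longrightarrow> b \<le> 1 \<Longrightarrow> gg b < gg a"
  apply (rule DERIV_neg_imp_decreasing_open[of a b gg])
    apply simp
   apply (rule_tac x="- ln (2 - x) / x^2" in exI)
   apply (auto intro!: gg_deriv[simplified])
  apply (rule gg_cont; simp)
  done

lemma ff_cont: "continuous_on {2/5..1} ff"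
proof -
  have "continuous_on {2/5..1} (\<lambda>p. exp (gg p))"
    by (intro continuous_on_exp gg_cont) auto
  thus ?thesis by (rule continuous_on_cong[THEN iffD1, rotated 2]) (auto simp: ff_gg)
qed

lemma ff_25: "ff (2/5) > 1"
proof -
  have "ff (2/5) = sqrt (1/5) * (8/5)^2"
    by (simp add: ff_def powr_half_sqrt)
  also have "sqrt (1/5) * (8/5)^2 > (1::real)"
  proof -
    have "sqrt (1/5) > (25/64::real)"
      by (rule real_less_rsqrt) (simp add: power2_eq_square)
    thus ?thesis by (simp add: power2_eq_square)
  qed
  finally show ?thesis .
qed

lemma ff_1: "ff 1 < 1"
proof -
  have "ff 1 = sqrt (1/2)" by (simp add: ff_def powr_half_sqrt)
  also have "\<dots> < 1" by simp
  finally show ?thesis .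
qed

lemma pstar_prop: "pstar \<in> {0<..1} \<and> ff pstar = 1"
proof -
  obtain x where x: "2/5 \<le> x" "x \<le> 1" "ff x = 1"
    using IVT2'[of ff 1 1 "2/5", OF _ _ _ ff_cont] ff_25 ff_1 by auto
  have uniq: "y = x" if "y \<in> {0<..1}" "ff y = 1" for y
  proof (rule ccontr)
    assume "y \<noteq> x"
    hence "gg y \<noteq> gg x"
      using gg_decr[of y x] gg_decr[of x y] that x by (cases "y < x") auto
    thus False using that x ff_gg[of y] ff_gg[of x] by auto
  qed
  have "\<exists>!y. y \<in> {0<..1} \<and> ff y = 1"
    using x uniq by (intro ex1I[of _ x]) auto
  from theI'[OF this] show ?thesis
    unfolding pstar_def ff_def[symmetric] by simp
qed

lemma ff_le: "0 < p \<Longrightarrow> p < 1 \<Longrightarrow> p \<le> pstar \<Longrightarrow> ff p \<ge> 1"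
  using pstar_prop gg_decr[of p pstar] ff_gg[of p] ff_gg[of pstar]
  by (cases "p = pstar") auto

lemma ff_ge: "0 < p \<Longrightarrow> p < 1 \<Longrightarrow> p > pstar \<Longrightarrow> ff p \<le> 1"
  using pstar_prop gg_decr[of pstar p] ff_gg[of p] ff_gg[of pstar]
  by auto




definition Aa :: "real \<Rightarrow> real" where
  "Aa p = (p/2) powr (1/2) * (2/(2 - p)) powr (1/2 - 1/p)"
definition Bb :: "real \<Rightarrow> real" where
  "Bb p = 2 powr (1/2 - 1/p)"

lemma Aa_ff: "0 < p \<Longrightarrow> p < 1 \<Longrightarrow> Aa p = ff p * Bb p"
proof -
  assume p: "0 < p" "p < 1"
  have "(2/(2 - p)) powr (1/2 - 1/p) = 2 powr (1/2 - 1/p) * (2 - p) powr (1/p - 1/2)"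
  proof -
    have "(2/(2 - p)) powr (1/2 - 1/p) = 2 powr (1/2 - 1/p) / (2 - p) powr (1/2 - 1/p)"
      by (rule powr_divide)
    also have "1 / (2 - p) powr (1/2 - 1/p) = (2 - p) powr (- (1/2 - 1/p))"
      by (rule powr_minus_divide[symmetric])
    hence "2 powr (1/2 - 1/p) / (2 - p) powr (1/2 - 1/p) = 2 powr (1/2 - 1/p) * (2 - p) powr (1/p - 1/2)"
      by (metis minus_diff_eq times_divide_eq_right mult_1_right)
    finally show ?thesis .
  qed
  thus ?thesis by (simp add: Aa_def Bb_def ff_def)
qed

lemma C1_ge: assumes "0 < p" "p < 1" shows "Aa p \<le> C1 p" "Bb p \<le> C1 p"
proof -
  have B0: "Bb p > 0" by (simp add: Bb_def)
  have "C1 p = (if p \<le> pstar then Aa p else Bb p)" by (simp add: C1_def Aa_def Bb_def)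
  moreover have "p \<le> pstar \<Longrightarrow> Bb p \<le> Aa p"
    using ff_le[OF assms] Aa_ff[OF assms] B0 by simp
  moreover have "\<not> p \<le> pstar \<Longrightarrow> Aa p \<le> Bb p"
    using ff_ge[OF assms] Aa_ff[OF assms] B0 by (simp add: mult_le_cancel_right1)
  ultimately show "Aa p \<le> C1 p" "Bb p \<le> C1 p" by auto
qed

lemma bern_lt1: fixes p t :: real assumes "0 < p" "p < 1" "0 \<le> t" shows "t powr p \<le> 1 + p * (t - 1)"
proof (cases "t = 0")
  case False
  hence "t powr p * 1 powr (1 - p) \<le> p * t + (1 - p) * 1"
    using assms by (intro Youngs_inequality_0) auto
  thus ?thesis by (simp add: algebra_simps)
qed (use assms in auto)

lemma bern_gt1: fixes q t :: real assumes "1 < q" "0 \<le> t" shows "1 + q * (t - 1) \<le> t powr q"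
proof (cases "t = 0")
  case False
  hence "(t powr q) powr (1/q) * 1 powr (1 - 1/q) \<le> (1/q) * (t powr q) + (1 - 1/q) * 1"
    using assms by (intro Youngs_inequality_0) auto
  hence "t \<le> (1/q) * (t powr q) + (1 - 1/q)"
    using assms by (simp add: powr_powr)
  hence "q * t \<le> q * ((1/q) * (t powr q) + (1 - 1/q))"
    using assms by simp
  thus ?thesis using assms by (simp add: algebra_simps)
qed (use assms in auto)

lemma concave_pow: fixes p x y l :: real
  assumes "0 < p" "p < 1" "0 \<le> x" "0 \<le> y" "0 \<le> l" "l \<le> 1"
  shows "l * x powr p + (1 - l) * y powr p \<le> (l * x + (1 - l) * y) powr p"
proof (cases "l * x + (1 - l) * y = 0")
  case True
  have "0 \<le> l * x" "0 \<le> (1 - l) * y" using assms by simp_all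
  hence "l * x = 0" "(1 - l) * y = 0" using True by linarith+
  hence "l * x powr p = 0" "(1 - l) * y powr p = 0" by auto
  moreover have "(l * x + (1 - l) * y) powr p = 0" using True by simp
  ultimately show ?thesis by linarith
next
  case False
  define z where "z = l * x + (1 - l) * y"
  have "0 \<le> l * x" "0 \<le> (1 - l) * y" using assms by simp_all
  hence z: "z > 0" using False unfolding z_def by linarith
  have hx: "(x / z) powr p \<le> 1 + p * (x / z - 1)" using bern_lt1 assms z by simp
  have hy: "(y / z) powr p \<le> 1 + p * (y / z - 1)" using bern_lt1 assms z by simp
  have "l * (x / z) powr p + (1 - l) * (y / z) powr p
        \<le> l * (1 + p * (x / z - 1)) + (1 - l) * (1 + p * (y / z - 1))"
    using hx hy assms by (intro add_mono mult_left_mono) auto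
  also have "\<dots> = 1 + p * ((l * x + (1 - l) * y) / z - 1)"
    using z by (simp add: field_simps)
  also have "\<dots> = 1" using z by (simp add: z_def)
  finally have "(l * x powr p + (1 - l) * y powr p) / z powr p \<le> 1"
    using assms z by (simp add: powr_divide add_divide_distrib)
  thus ?thesis using z by (simp add: z_def)
qed




definition Pn :: "real \<Rightarrow> nat set \<Rightarrow> (nat \<Rightarrow> real) \<Rightarrow> real" where
  "Pn p I f = (\<Sum>i\<in>I. f i powr p) powr (1/p)"

lemma Pn_nonneg: "Pn p I f \<ge> 0" by (simp add: Pn_def)

lemma Pn_scale: assumes "0 < p" "0 \<le> c" "\<And>i. i \<in> I \<Longrightarrow> 0 \<le> f i"
  shows "Pn p I (\<lambda>i. c * f i) = c * Pn p I f"
proof -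
  have "(\<Sum>i\<in>I. (c * f i) powr p) = c powr p * (\<Sum>i\<in>I. f i powr p)"
    using assms by (simp add: powr_mult sum_distrib_left)
  hence "Pn p I (\<lambda>i. c * f i) = (c powr p) powr (1/p) * Pn p I f"
    using assms by (simp add: Pn_def powr_mult sum_nonneg)
  thus ?thesis using assms by (simp add: powr_powr)
qed

lemma Pn_zero: assumes "0 < p" "finite I" "\<And>i. i \<in> I \<Longrightarrow> 0 \<le> f i" "Pn p I f = 0"
  shows "\<forall>i\<in>I. f i = 0"
proof -
  have "(\<Sum>i\<in>I. f i powr p) = 0" using assms(4) by (simp add: Pn_def)
  hence "\<forall>i\<in>I. f i powr p = 0" using assms by (subst (asm) sum_nonneg_eq_0_iff) auto
  thus ?thesis using assms(1) by auto
qed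

lemma rev_mink: assumes p: "0 < p" "p < 1" and I: "finite I"
  and f: "\<And>i. i \<in> I \<Longrightarrow> 0 \<le> f i" and g: "\<And>i. i \<in> I \<Longrightarrow> 0 \<le> g i"
  shows "Pn p I f + Pn p I g \<le> Pn p I (\<lambda>i. f i + g i)"
proof -
  define A where "A = Pn p I f"
  define B where "B = Pn p I g"
  show ?thesis
  proof (cases "A = 0 \<or> B = 0")
    case True
    then show ?thesis
    proof
      assume "A = 0"
      hence "\<And>i. i \<in> I \<Longrightarrow> f i = 0" using Pn_zero[of p I f, OF p(1) I f] A_def by auto
      hence "Pn p I (\<lambda>i. f i + g i) = Pn p I g" unfolding Pn_def by (simp cong: sum.cong)
      thus ?thesis using \<open>A = 0\<close> A_def by simp
    next
      assume "B = 0"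
      hence "\<And>i. i \<in> I \<Longrightarrow> g i = 0" using Pn_zero[of p I g, OF p(1) I g] B_def by auto
      hence "Pn p I (\<lambda>i. f i + g i) = Pn p I f" unfolding Pn_def by (simp cong: sum.cong)
      thus ?thesis using \<open>B = 0\<close> B_def by simp
    qed
  next
    case False
    hence A: "A > 0" and B: "B > 0" using Pn_nonneg A_def B_def by (auto simp: order_le_less)
    define l where "l = A / (A + B)"
    have l: "0 \<le> l" "l \<le> 1" "1 - l = B / (A + B)" using A B by (auto simp: l_def field_simps)
    have SA: "(\<Sum>i\<in>I. f i powr p) = A powr p"
      using p by (simp add: A_def Pn_def powr_powr sum_nonneg)
    have SB: "(\<Sum>i\<in>I. g i powr p) = B powr p"
      using p by (simp add: B_def Pn_def powr_powr sum_nonneg)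
    have pt: "(A + B) powr p * (l * (f i / A) powr p + (1 - l) * (g i / B) powr p)
               \<le> (f i + g i) powr p" if "i \<in> I" for i
    proof -
      have "l * (f i / A) powr p + (1 - l) * (g i / B) powr p \<le> (l * (f i / A) + (1 - l) * (g i / B)) powr p"
        using concave_pow[OF p, of "f i / A" "g i / B" l] f g that A B l by auto
      also have "l * (f i / A) + (1 - l) * (g i / B) = (f i + g i) / (A + B)"
      proof -
        have "l * (f i / A) = f i / (A + B)" using A B by (simp add: l_def)
        moreover have "(1 - l) * (g i / B) = g i / (A + B)" using A B by (simp add: l(3))
        ultimately show ?thesis by (simp add: add_divide_distrib)
      qed
      also have "((f i + g i) / (A + B)) powr p = (f i + g i) powr p / (A + B) powr p"
        using A B f g that by (simp add: powr_divide)
      finally show ?thesis using A B by (simp add: field_simps)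
    qed
    have "(A + B) powr p = (A + B) powr p * (l * ((\<Sum>i\<in>I. f i powr p) / A powr p) + (1 - l) * ((\<Sum>i\<in>I. g i powr p) / B powr p))"
      using A B by (simp add: SA SB)
    also have "\<dots> = (\<Sum>i\<in>I. (A + B) powr p * (l * (f i / A) powr p + (1 - l) * (g i / B) powr p))"
    proof -
      define c1 where "c1 = (A + B) powr p * l / A powr p"
      define c2 where "c2 = (A + B) powr p * (1 - l) / B powr p"
      have eq: "(A + B) powr p * (l * (f i / A) powr p + (1 - l) * (g i / B) powr p)
                = c1 * f i powr p + c2 * g i powr p" if "i \<in> I" for i
        using A B f g that by (simp add: powr_divide c1_def c2_def algebra_simps)
      have "(\<Sum>i\<in>I. (A + B) powr p * (l * (f i / A) powr p + (1 - l) * (g i / B) powr p))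
            = (\<Sum>i\<in>I. c1 * f i powr p + c2 * g i powr p)"
        using eq by (rule sum.cong[OF refl])
      also have "\<dots> = c1 * (\<Sum>i\<in>I. f i powr p) + c2 * (\<Sum>i\<in>I. g i powr p)"
        by (simp add: sum.distrib sum_distrib_left)
      also have "\<dots> = (A + B) powr p * (l * ((\<Sum>i\<in>I. f i powr p) / A powr p) + (1 - l) * ((\<Sum>i\<in>I. g i powr p) / B powr p))"
        by (simp add: c1_def c2_def algebra_simps)
      finally show ?thesis by simp
    qed
    also have "\<dots> \<le> (\<Sum>i\<in>I. (f i + g i) powr p)"
      by (rule sum_mono) (rule pt)
    finally have "((A + B) powr p) powr (1/p) \<le> (\<Sum>i\<in>I. (f i + g i) powr p) powr (1/p)"
      using p A B by (intro powr_mono2) auto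
    thus ?thesis using p A B by (simp add: powr_powr A_def B_def Pn_def)
  qed
qed

lemma rev_mink_sum: assumes p: "0 < p" "p < 1" and I: "finite I" and J: "finite J"
  and g: "\<And>j i. j \<in> J \<Longrightarrow> i \<in> I \<Longrightarrow> 0 \<le> g j i"
  shows "(\<Sum>j\<in>J. Pn p I (g j)) \<le> Pn p I (\<lambda>i. \<Sum>j\<in>J. g j i)"
  using J g
proof (induction J rule: finite_induct)
  case empty
  then show ?case by (simp add: Pn_def)
next
  case (insert x F)
  have "(\<Sum>j\<in>insert x F. Pn p I (g j)) = Pn p I (g x) + (\<Sum>j\<in>F. Pn p I (g j))"
    using insert by simp
  also have "\<dots> \<le> Pn p I (g x) + Pn p I (\<lambda>i. \<Sum>j\<in>F. g j i)"
    using insert by simp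
  also have "\<dots> \<le> Pn p I (\<lambda>i. g x i + (\<Sum>j\<in>F. g j i))"
    using insert by (intro rev_mink[OF p I]) (auto intro: sum_nonneg)
  also have "\<dots> = Pn p I (\<lambda>i. \<Sum>j\<in>insert x F. g j i)"
    using insert by simp
  finally show ?case .
qed

lemma L2_sum: assumes "finite J"
  shows "L2_set (\<lambda>i. \<Sum>j\<in>J. g j i) I \<le> (\<Sum>j\<in>J. L2_set (g j) I)"
  using assms
proof (induction J rule: finite_induct)
  case empty
  then show ?case by (simp add: L2_set_def)
next
  case (insert x F)
  have "L2_set (\<lambda>i. \<Sum>j\<in>insert x F. g j i) I = L2_set (\<lambda>i. g x i + (\<Sum>j\<in>F. g j i)) I"
    using insert by simp
  also have "\<dots> \<le> L2_set (g x) I + L2_set (\<lambda>i. \<Sum>j\<in>F. g j i) I"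
    by (rule L2_set_triangle_ineq)
  also have "\<dots> \<le> L2_set (g x) I + (\<Sum>j\<in>F. L2_set (g j) I)"
    using insert by simp
  finally show ?case using insert by simp
qed




lemma Abound:
  fixes p K J :: real
  assumes p: "0 < p" "p < 1" and K: "0 < K" "K \<le> J"
  shows "sqrt (J - K) \<le> Aa p * K powr (1/2 - 1/p) * J powr (1/p)"
proof -
  define q where "q = 2 / p"
  define y0 where "y0 = 2 / (2 - p)"
  define x where "x = J / K"
  have q: "q > 1" using p by (simp add: q_def)
  have y0: "y0 > 0" using p by (simp add: y0_def)
  have J: "J > 0" using K by simp
  define Y where "Y = y0 powr q"
  define KQ where "KQ = K powr q"
  define JQ where "JQ = J powr q"
  have pos: "Y > 0" "KQ > 0" "JQ > 0" using y0 K J by (simp_all add: Y_def KQ_def JQ_def)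
  have sq: "(a powr e)^2 = a powr (2 * e)" for a e :: real
    by (simp add: power2_eq_square powr_add[symmetric])
  have "(Aa p * K powr (1/2 - 1/p) * J powr (1/p))^2
        = ((p/2) powr (1/2))^2 * (y0 powr (1/2 - 1/p))^2 * (K powr (1/2 - 1/p))^2 * (J powr (1/p))^2"
    by (simp add: Aa_def y0_def power_mult_distrib)
  also have "\<dots> = (p/2) * y0 powr (1 - q) * K powr (1 - q) * J powr q"
    using p by (simp add: sq q_def algebra_simps)
  also have "\<dots> = (p/2) * (y0 / Y) * (K / KQ) * JQ"
    using y0 K by (simp add: powr_diff Y_def KQ_def JQ_def)
  finally have R: "(Aa p * K powr (1/2 - 1/p) * J powr (1/p))^2 = (p/2) * (y0 / Y) * (K / KQ) * JQ" .
  have xy: "(x / y0) powr q = JQ / (KQ * Y)"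
    using K by (simp add: x_def JQ_def KQ_def Y_def powr_divide powr_mult)
  have bern: "1 + q * (x / y0 - 1) \<le> (x / y0) powr q"
    using bern_gt1[OF q, of "x / y0"] y0 K J by (simp add: x_def)
  have "J - K = K * ((p / (2 - p)) * (1 + q * (x / y0 - 1)))"
    using p K by (simp add: q_def y0_def x_def field_simps)
  also have "\<dots> \<le> K * ((p / (2 - p)) * (x / y0) powr q)"
    using bern p K by (intro mult_left_mono) auto
  also have "\<dots> = (p/2) * (y0 / Y) * (K / KQ) * JQ"
    unfolding xy using pos p y0 by (simp add: y0_def field_simps)
  finally have "J - K \<le> (Aa p * K powr (1/2 - 1/p) * J powr (1/p))^2" using R by simp
  hence "sqrt (J - K) \<le> sqrt ((Aa p * K powr (1/2 - 1/p) * J powr (1/p))^2)"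
    by (rule real_sqrt_le_mono)
  also have "\<dots> = Aa p * K powr (1/2 - 1/p) * J powr (1/p)"
    using p by (simp add: Aa_def y0_def)
  finally show ?thesis .
qed

lemma Bbound:
  fixes p K :: real
  assumes p: "0 < p" and K: "0 < K"
  shows "Bb p * K powr (1/2 - 1/p) * (2 * K) powr (1/p) = sqrt (2 * K)"
proof -
  have "Bb p * K powr (1/2 - 1/p) = (2 * K) powr (1/2 - 1/p)"
    using K by (simp add: Bb_def powr_mult)
  moreover have "(2 * K) powr (1/2 - 1/p) * (2 * K) powr (1/p) = (2 * K) powr (1/2)"
    by (simp add: powr_add[symmetric])
  ultimately show ?thesis using K by (simp add: powr_half_sqrt)
qed




definition ee :: "nat \<Rightarrow> nat \<Rightarrow> real" where
  "ee j i = (if i \<le> j then 1 else 0)"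

lemma sum_ee: "finite A \<Longrightarrow> (\<Sum>i\<in>A. ee j i) = real (card {i\<in>A. i \<le> j})"
  by (simp add: ee_def sum.inter_filter[symmetric])

lemma layer:
  assumes p: "0 < p" "p < 1" and k: "k \<ge> 1" and j: "j \<le> 3*k"
  shows "L2_set (ee j) {k+1..3*k} \<le> C1 p * real k powr (1/2 - 1/p) * Pn p {1..2*k} (ee j)"
proof -
  have C: "C1 p \<ge> 0" using C1_ge(2)[OF p] by (smt (verit) Bb_def powr_gt_zero)
  have RHS0: "C1 p * real k powr (1/2 - 1/p) * Pn p {1..2*k} (ee j) \<ge> 0"
    using C Pn_nonneg by simp
  have "(\<Sum>i\<in>{k+1..3*k}. (ee j i)^2) = (\<Sum>i\<in>{k+1..3*k}. ee j i)"
    by (rule sum.cong) (auto simp: ee_def)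
  also have "\<dots> = real (card {i\<in>{k+1..3*k}. i \<le> j})" by (simp add: sum_ee)
  also have "{i\<in>{k+1..3*k}. i \<le> j} = {k+1..j}" using j by auto
  finally have L: "L2_set (ee j) {k+1..3*k} = sqrt (real j - real k)" if "k < j"
    using that by (simp add: L2_set_def of_nat_diff)
  have "(\<Sum>i\<in>{1..2*k}. ee j i powr p) = (\<Sum>i\<in>{1..2*k}. ee j i)"
    using p by (intro sum.cong) (auto simp: ee_def)
  also have "\<dots> = real (card {i\<in>{1..2*k}. i \<le> j})" by (simp add: sum_ee)
  also have "{i\<in>{1..2*k}. i \<le> j} = {1..min j (2*k)}" by auto
  finally have P: "Pn p {1..2*k} (ee j) = real (min j (2*k)) powr (1/p)"
    by (simp add: Pn_def)
  consider "j \<le> k" | "k < j" "j \<le> 2*k" | "2*k < j" by linarith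
  then show ?thesis
  proof cases
    case 1
    hence "L2_set (ee j) {k+1..3*k} = 0" by (intro L2_set_0') (auto simp: ee_def)
    thus ?thesis using RHS0 by simp
  next
    case 2
    have "sqrt (real j - real k) \<le> Aa p * real k powr (1/2 - 1/p) * real j powr (1/p)"
      using 2 k by (intro Abound p) auto
    also have "\<dots> \<le> C1 p * real k powr (1/2 - 1/p) * real j powr (1/p)"
      using C1_ge(1)[OF p] by (intro mult_right_mono) auto
    finally show ?thesis using 2 L P by (simp add: min_def)
  next
    case 3
    have "sqrt (real j - real k) \<le> sqrt (2 * real k)"
      using j by simp
    also have "\<dots> = Bb p * real k powr (1/2 - 1/p) * (2 * real k) powr (1/p)"
      using Bbound[OF p(1), of "real k"] k by simp
    also have "\<dots> \<le> C1 p * real k powr (1/2 - 1/p) * (2 * real k) powr (1/p)"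
      using C1_ge(2)[OF p] by (intro mult_right_mono) auto
    finally show ?thesis using 3 L P by (simp add: min_def)
  qed
qed

theorem corollary5:
  fixes p :: real and k :: nat and u :: "nat \<Rightarrow> real"
  assumes "0 < p" "p < 1" "k \<ge> 1"
    and "\<And>i j. 1 \<le> i \<Longrightarrow> i \<le> j \<Longrightarrow> j \<le> 3*k \<Longrightarrow> u j \<le> u i"
    and "\<And>i. 1 \<le> i \<Longrightarrow> i \<le> 3*k \<Longrightarrow> 0 \<le> u i"
  shows "(\<Sum>i=k+1..3*k. (u i)^2) powr (1/2)
         \<le> C1 p * real k powr (1/2 - 1/p) * (\<Sum>i=1..2*k. u i powr p) powr (1/p)"
proof -
  note p = assms(1,2)
  define n where "n = 3*k"
  define J where "J = {1..n}"
  define v where "v j = (if j < n then u j - u (Suc j) else u n)" for j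
  define CK where "CK = C1 p * real k powr (1/2 - 1/p)"
  have "C1 p \<ge> 0" using C1_ge(2)[OF p] by (smt (verit) Bb_def powr_gt_zero)
  hence CK: "CK \<ge> 0" unfolding CK_def by simp
  have v: "v j \<ge> 0" if "j \<in> J" for j
    using that assms(4)[of j "Suc j"] assms(5)[of n] by (auto simp: v_def J_def n_def)
  have dec: "u i = (\<Sum>j\<in>J. v j * ee j i)" if "i \<in> J" for i
  proof -
    have "(\<Sum>j\<in>J. v j * ee j i) = (\<Sum>j\<in>J. if i \<le> j then v j else 0)"
      by (rule sum.cong) (auto simp: ee_def)
    also have "\<dots> = (\<Sum>j\<in>{j\<in>J. i \<le> j}. v j)"
      by (rule sum.inter_filter[symmetric]) (simp add: J_def)
    also have "{j\<in>J. i \<le> j} = insert n {i..<n}" using that by (auto simp: J_def)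
    also have "(\<Sum>j\<in>insert n {i..<n}. v j) = v n + (\<Sum>j\<in>{i..<n}. v j)" by simp
    also have "(\<Sum>j\<in>{i..<n}. v j) = (\<Sum>j\<in>{i..<n}. u j - u (Suc j))"
      by (rule sum.cong) (auto simp: v_def)
    also have "\<dots> = u i - u n"
      using sum_Suc_diff'[of i n "\<lambda>j. - u j"] that by (simp add: J_def)
    finally show ?thesis by (simp add: v_def)
  qed
  have I2: "{k+1..3*k} \<subseteq> J" and I1: "{1..2*k} \<subseteq> J" by (auto simp: J_def n_def)
  have "L2_set u {k+1..3*k} = L2_set (\<lambda>i. \<Sum>j\<in>J. v j * ee j i) {k+1..3*k}"
    using I2 dec by (intro L2_set_cong) auto
  also have "\<dots> \<le> (\<Sum>j\<in>J. L2_set (\<lambda>i. v j * ee j i) {k+1..3*k})"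
    by (rule L2_sum) (simp add: J_def)
  also have "\<dots> = (\<Sum>j\<in>J. v j * L2_set (ee j) {k+1..3*k})"
    using v by (intro sum.cong refl L2_set_right_distrib[symmetric]) auto
  also have "\<dots> \<le> (\<Sum>j\<in>J. v j * (CK * Pn p {1..2*k} (ee j)))"
    using v layer[OF p assms(3)] unfolding CK_def
    by (intro sum_mono mult_left_mono) (auto simp: J_def n_def mult.assoc)
  also have "\<dots> = (\<Sum>j\<in>J. CK * Pn p {1..2*k} (\<lambda>i. v j * ee j i))"
  proof (rule sum.cong[OF refl])
    fix j assume "j \<in> J"
    hence "Pn p {1..2*k} (\<lambda>i. v j * ee j i) = v j * Pn p {1..2*k} (ee j)"
      using v p by (intro Pn_scale) (auto simp: ee_def)
    thus "v j * (CK * Pn p {1..2*k} (ee j)) = CK * Pn p {1..2*k} (\<lambda>i. v j * ee j i)"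
      by simp
  qed
  also have "\<dots> = CK * (\<Sum>j\<in>J. Pn p {1..2*k} (\<lambda>i. v j * ee j i))"
    by (simp add: sum_distrib_left)
  also have "\<dots> \<le> CK * Pn p {1..2*k} (\<lambda>i. \<Sum>j\<in>J. v j * ee j i)"
    using v CK by (intro mult_left_mono rev_mink_sum p) (auto simp: J_def ee_def)
  also have "Pn p {1..2*k} (\<lambda>i. \<Sum>j\<in>J. v j * ee j i) = Pn p {1..2*k} u"
    unfolding Pn_def using I1 dec by (intro arg_cong[where f="\<lambda>x. x powr (1/p)"] sum.cong) auto
  finally have "L2_set u {k+1..3*k} \<le> CK * Pn p {1..2*k} u" .
  moreover have "(\<Sum>i=k+1..3*k. (u i)^2) powr (1/2) = L2_set u {k+1..3*k}"
    by (simp add: L2_set_def powr_half_sqrt sum_nonneg)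
  ultimately show ?thesis by (simp add: CK_def Pn_def)
qed


end
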